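(* Let $d,n,k\ge1$, let $x_0,x_1,\dots,x_n\in\mathbb{R}^d$, and let $T_1,\dots,T_k:\mathbb{R}^d\to\mathbb{R}^d$ be maps. Define $V=\operatorname{span}\{T_1(x_0)-x_0,\dots,T_k(x_0)-x_0\}$, and for each $i\in\{1,\dots,n\}$ let $z_i$ be the orthogonal projection of $x_i-x_0$ onto $V^\perp$. Let $M^*$ be the minimizer of $$\min_M \tfrac12\|M\|^2 \quad\text{subject to}\quad z_i^T M z_i\ge 2\ \ \forall i\in\{1,\dots,n\},\quad M\succeq 0.$$ Then $M^*$ is the minimizer of $$\min_M \tfrac12\|M\|^2 \quad\text{subject to}\quad \begin{cases}(x_i-x_0)^T M (x_i-x_0)\ge 2 & \forall i\in\{1,\dots,n\},\\ (T_j(x_0)-x_0)^T M (T_j(x_0)-x_0)=0 & \forall j\in\{1,\dots,k\},\\ M\succeq 0.\end{cases}$$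
   Context: $M$ ranges over real $d\times d$ matrices; $\|M\|$ is the Frobenius norm, $\|M\|^2=\sum_{ij}M_{ij}^2$; $M\succeq 0$ means $M$ is symmetric positive semidefinite. $V^\perp$ is the orthogonal complement of $V$ in $\mathbb{R}^d$ with respect to the standard inner product. *)

theory Defs
  imports "HOL-Analysis.Analysis"
begin

definition orth_proj :: "('a::euclidean_space) set \<Rightarrow> 'a \<Rightarrow> 'a" where
  "orth_proj W v = (THE p. p \<in> W \<and> v - p \<in> orthogonal_comp W)"

definition frob_norm :: "real^'n^'n \<Rightarrow> real" where
  "frob_norm M = sqrt (\<Sum>i\<in>UNIV. \<Sum>j\<in>UNIV. (M $ i $ j)^2)"

definition psd :: "real^'n^'n \<Rightarrow> bool" where
  "psd M \<longleftrightarrow> transpose M = M \<and> (\<forall>v. 0 \<le> v \<bullet> (M *v v))"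

definition is_the_minimizer :: "('a \<Rightarrow> real) \<Rightarrow> 'a set \<Rightarrow> 'a \<Rightarrow> bool" where
  "is_the_minimizer f S M \<longleftrightarrow> M \<in> S \<and> (\<forall>M'\<in>S. M' \<noteq> M \<longrightarrow> f M < f M')"

end

theory Submission
  imports Defs
begin

lemma proj_exists:
  fixes V :: "(real^'d) set"
  assumes "subspace V"
  shows "\<exists>p. linear p \<and> (\<forall>v. p v \<in> orthogonal_comp V) \<and> (\<forall>v. v - p v \<in> V)"
proof -
  obtain B where "B \<subseteq> V"
    and ortho: "pairwise orthogonal B" "\<And>x. x \<in> B \<Longrightarrow> norm x = 1"
    and "independent B" "card B = dim V" "span B = V"
    using orthonormal_basis_subspace [OF assms] by metis
  then have "finite B"
    by (simp add: indep_card_eq_dim_span)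
  have *: "\<forall>x\<in>B. \<forall>y\<in>B. x \<bullet> y = (if x=y then 1 else 0)"
    using ortho norm_eq_1 by (auto simp: orthogonal_def pairwise_def)
  define p where "p = (\<lambda>v. v - (\<Sum>b\<in>B. (v \<bullet> b) *\<^sub>R b))"
  have lin: "linear p" unfolding p_def
    by (intro linear_compose_sub linear_id linear_compose_sum) (auto simp: linear_iff inner_add_left scaleR_add_left)
  { fix v
    let ?u = "\<Sum>b\<in>B. (v \<bullet> b) *\<^sub>R b"
    have "?u \<in> V"
      by (metis (no_types, lifting) \<open>span B = V\<close> assms subspace_sum span_base span_mul)
    hence "v - p v \<in> V" by (simp add: p_def)
    moreover have "(v - ?u) \<in> V\<^sup>\<bottom>"
      unfolding orthogonal_comp_def orthogonal_def mem_Collect_eq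
    proof 
      fix y
      assume "y \<in> V"
      with \<open>span B = V\<close> span_finite [OF \<open>finite B\<close>]
      obtain u where u: "y = (\<Sum>b\<in>B. u b *\<^sub>R b)"
        by auto
      have "b \<bullet> (v - ?u) = 0" if "b \<in> B" for b
        using that \<open>finite B\<close>
        by (simp add: * algebra_simps inner_sum_right if_distrib [of "(*)v" for v] inner_commute cong: if_cong)
      then show "y \<bullet> (v - ?u) = 0"
        by (simp add: u inner_sum_left)
    qed
    ultimately have "v - p v \<in> V \<and> p v \<in> V\<^sup>\<bottom>" by (simp add: p_def)
  }
  with lin show ?thesis by blast
qed

lemma quad_zero_aux:
  fixes a b :: real
  assumes "\<And>t. 0 \<le> a*t^2 - 2*b*t" "a \<ge> 0" "b \<ge> 0"
  shows "b = 0"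
proof (rule ccontr)
  assume "b \<noteq> 0" hence bp: "b > 0" using assms by simp
  define t where "t = b/(a+1)"
  have tp: "t > 0" using bp assms by (simp add: t_def)
  have "a*t \<le> b" using assms bp by (simp add: t_def field_simps)
  hence "a*t^2 \<le> b*t" using tp by (simp add: power2_eq_square mult_right_mono mult.assoc[symmetric])
  moreover have "0 < b*t" using bp tp by simp
  ultimately show False using assms(1)[of t] by linarith
qed

lemma psd_kernel:
  fixes M :: "real^'d^'d"
  assumes sym: "transpose M = M" and pos: "\<And>v. 0 \<le> v \<bullet> (M *v v)" and w: "w \<bullet> (M *v w) = 0"
  shows "M *v w = 0"
proof -
  define y where "y = M *v w"
  have adj: "\<And>a b. a \<bullet> (M *v b) = (M *v a) \<bullet> b"
    by (metis dot_lmul_matrix sym transpose_matrix_vector)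
  have "\<And>t. 0 \<le> (y \<bullet> (M *v y))*t^2 - 2*(y \<bullet> y)*t"
  proof -
    fix t
    have "0 \<le> (w - t *\<^sub>R y) \<bullet> (M *v (w - t *\<^sub>R y))" by (rule pos)
    also have "\<dots> = w \<bullet> (M *v w) - t * (w \<bullet> (M *v y)) - t * (y \<bullet> (M *v w)) + t*t*(y \<bullet> (M *v y))"
      by (simp add: algebra_simps inner_diff_left inner_diff_right)
    also have "w \<bullet> (M *v y) = y \<bullet> y" using adj y_def by simp
    also have "y \<bullet> (M *v w) = y \<bullet> y" using y_def by simp
    finally show "0 \<le> (y \<bullet> (M *v y))*t^2 - 2*(y \<bullet> y)*t" using w by (simp add: power2_eq_square algebra_simps)
  qed
  from quad_zero_aux[OF this pos] have "y \<bullet> y = 0" by simp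
  thus ?thesis by (simp add: y_def)
qed

definition G :: "real^'n^'n \<Rightarrow> real" where
  "G A = (\<Sum>i\<in>UNIV. \<Sum>j\<in>UNIV. (A $ i $ j)^2)"
definition F :: "real^'n^'n \<Rightarrow> real^'n^'n \<Rightarrow> real" where
  "F A B = (\<Sum>i\<in>UNIV. \<Sum>j\<in>UNIV. A $ i $ j * B $ i $ j)"

lemma frob_G: "(frob_norm A)^2 = G A"
  unfolding frob_norm_def G_def by (simp add: sum_nonneg)

lemma F_trace: "F A B = trace (transpose A ** B)"
  unfolding F_def trace_def matrix_matrix_mult_def transpose_def
  by simp (rule sum.swap)

lemma G_F: "G A = F A A"
  by (simp add: G_def F_def power2_eq_square)

lemma G_diff: "G (A - B) = G A - 2 * F A B + G B"
proof -
  have "\<And>i j. ((A - B) $ i $ j)^2 = (A$i$j)^2 - 2 * (A $ i $ j * B $ i $ j) + (B$i$j)^2"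
    by (simp add: power2_eq_square algebra_simps)
  thus ?thesis
    by (simp add: G_def F_def sum.distrib sum_subtractf sum_distrib_left)
qed

lemma G_decomp:
  fixes M P :: "real^'n^'n"
  assumes "transpose M = M" "transpose P = P" "P ** P = P"
  shows "G M = G (P ** M ** P) + G (M - P ** M ** P)"
proof -
  define N where "N = P ** M ** P"
  have tN: "transpose N = N" using assms by (simp add: N_def matrix_transpose_mul matrix_mul_assoc)
  define X where "X = M ** P ** M ** P"
  have e1: "trace (N ** N) = trace X"
  proof -
    have "N ** N = P ** M ** (P ** P) ** M ** P" by (simp add: N_def matrix_mul_assoc)
    also have "\<dots> = P ** X" using assms(3) by (simp add: X_def matrix_mul_assoc)
    finally have "trace (N ** N) = trace (P ** X)" by simp
    also have "\<dots> = trace (X ** P)" by (rule trace_mul_sym)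
    also have "X ** P = M ** P ** M ** (P ** P)" by (simp add: X_def matrix_mul_assoc)
    also have "\<dots> = X" using assms(3) by (simp add: X_def)
    finally show ?thesis .
  qed
  have e2: "trace (M ** N) = trace X"
  proof -
    have "trace (M ** N) = trace (N ** M)" by (rule trace_mul_sym)
    also have "N ** M = P ** (M ** P ** M)" by (simp add: N_def matrix_mul_assoc)
    also have "trace (P ** (M ** P ** M)) = trace ((M ** P ** M) ** P)" by (rule trace_mul_sym)
    also have "(M ** P ** M) ** P = X" by (simp add: X_def)
    finally show ?thesis .
  qed
  have "G (M - N) = G M - 2 * F M N + G N" by (rule G_diff)
  moreover have "F M N = trace X" using e2 assms(1) by (simp add: F_trace)
  moreover have "G N = trace X" using e1 tN by (simp add: G_F F_trace)
  ultimately show ?thesis by (simp add: N_def)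
qed

theorem theorem3:
  fixes n k :: nat
    and x :: "nat \<Rightarrow> real^'d"
    and T :: "nat \<Rightarrow> real^'d \<Rightarrow> real^'d"
    and Mstar :: "real^'d^'d"
  assumes "n \<ge> 1" and "k \<ge> 1"
  defines "V \<equiv> span {T j (x 0) - x 0 | j. j \<in> {1..k}}"
  defines "z \<equiv> (\<lambda>i. orth_proj (orthogonal_comp V) (x i - x 0))"
  assumes "is_the_minimizer (\<lambda>M. (1/2) * (frob_norm M)^2)
             {M. (\<forall>i\<in>{1..n}. z i \<bullet> (M *v z i) \<ge> 2) \<and> psd M} Mstar"
  shows "is_the_minimizer (\<lambda>M. (1/2) * (frob_norm M)^2)
             {M. (\<forall>i\<in>{1..n}. (x i - x 0) \<bullet> (M *v (x i - x 0)) \<ge> 2)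
               \<and> (\<forall>j\<in>{1..k}. (T j (x 0) - x 0) \<bullet> (M *v (T j (x 0) - x 0)) = 0)
               \<and> psd M} Mstar"
proof -
  have sV: "subspace V" unfolding V_def by simp
  have sVc: "subspace (orthogonal_comp V)" by (rule subspace_orthogonal_comp)
  obtain p where lp: "linear p" and p1: "\<And>v. p v \<in> orthogonal_comp V" and p2: "\<And>v. v - p v \<in> V"
    using proj_exists[OF sV] by blast
  define P :: "real^'d^'d" where "P = matrix p"
  have Pp: "\<And>v. P *v v = p v" unfolding P_def using matrix_vector_mul(2)[OF lp] by metis
  have P1: "\<And>v. P *v v \<in> orthogonal_comp V" and P2: "\<And>v. v - P *v v \<in> V"
    using p1 p2 Pp by auto
  have int0: "\<And>a. a \<in> V \<Longrightarrow> a \<in> orthogonal_comp V \<Longrightarrow> a = 0"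
    using orthogonal_Int_0[OF sV] by blast
  have orth: "\<And>a b. a \<in> V \<Longrightarrow> b \<in> orthogonal_comp V \<Longrightarrow> a \<bullet> b = 0"
    by (auto simp: orthogonal_comp_def orthogonal_def)
  have P0: "\<And>w. w \<in> V \<Longrightarrow> P *v w = 0"
  proof -
    fix w assume w: "w \<in> V"
    have "P *v w = w - (w - P *v w)" by simp
    also have "\<dots> \<in> V" by (rule subspace_diff[OF sV w P2])
    finally show "P *v w = 0" using int0 P1 by blast
  qed
  have Pid: "\<And>u. u \<in> orthogonal_comp V \<Longrightarrow> P *v u = u"
  proof -
    fix u assume u: "u \<in> orthogonal_comp V"
    have "u - P *v u \<in> orthogonal_comp V" using u P1 sVc by (simp add: subspace_diff)
    thus "P *v u = u" using int0 P2 by force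
  qed
  have adj: "\<And>a b. a \<bullet> (P *v b) = (P *v a) \<bullet> b"
  proof -
    fix a b
    have "a \<bullet> (P *v b) = (a - P *v a) \<bullet> (P *v b) + (P *v a) \<bullet> (P *v b)"
      by (simp add: inner_diff_left)
    also have "(a - P *v a) \<bullet> (P *v b) = 0" using orth P1 P2 by blast
    also have "(P *v a) \<bullet> b = (P *v a) \<bullet> (b - P *v b) + (P *v a) \<bullet> (P *v b)"
      by (simp add: inner_diff_right)
    moreover have "(P *v a) \<bullet> (b - P *v b) = 0" using orth P1 P2 by (metis inner_commute)
    ultimately show "a \<bullet> (P *v b) = (P *v a) \<bullet> b" by simp
  qed
  have PT: "transpose P = P"
  proof -
    have "\<And>a. transpose P *v a = P *v a"
    proof -
      fix a
      have "\<And>b. (transpose P *v a) \<bullet> b = (P *v a) \<bullet> b"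
        by (metis adj dot_lmul_matrix transpose_matrix_vector)
      hence "(transpose P *v a - P *v a) \<bullet> (transpose P *v a - P *v a) = 0"
        by (simp add: inner_diff_left)
      thus "transpose P *v a = P *v a" by simp
    qed
    thus ?thesis using matrix_eq by blast
  qed
  have PP: "P ** P = P"
    by (subst matrix_eq) (simp add: matrix_vector_mul_assoc[symmetric] Pid P1)
  have zP: "\<And>i. z i = P *v (x i - x 0)"
  proof -
    fix i
    let ?v = "x i - x 0"
    have "orth_proj (orthogonal_comp V) ?v = P *v ?v"
      unfolding orth_proj_def
    proof (rule the_equality)
      show "P *v ?v \<in> orthogonal_comp V \<and> ?v - P *v ?v \<in> orthogonal_comp (orthogonal_comp V)"
        using P1 P2 orthogonal_comp_subset by blast
    next
      fix q assume q: "q \<in> orthogonal_comp V \<and> ?v - q \<in> orthogonal_comp (orthogonal_comp V)"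
      hence qV: "?v - q \<in> V" using orthogonal_comp_self[OF sV] by simp
      have "q - P *v ?v \<in> orthogonal_comp V" using q P1 sVc by (simp add: subspace_diff)
      moreover have "q - P *v ?v = (?v - P *v ?v) - (?v - q)" by simp
      hence "q - P *v ?v \<in> V" using qV P2 sV by (metis subspace_diff)
      ultimately show "q = P *v ?v" using int0 by force
    qed
    thus "z i = P *v ?v" by (simp add: z_def)
  qed
  have quad: "\<And>M u. u \<bullet> ((P ** M ** P) *v u) = (P *v u) \<bullet> (M *v (P *v u))"
    by (simp add: matrix_vector_mul_assoc[symmetric] adj)
  have zfix: "\<And>i. P *v z i = z i" using zP PP by (simp add: matrix_vector_mul_assoc)
  define f where "f = (\<lambda>M::real^'d^'d. (1/2) * (frob_norm M)^2)"
  have fG: "\<And>M. f M = (1/2) * G M" by (simp add: f_def frob_G)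
  define S1 where "S1 = {M. (\<forall>i\<in>{1..n}. z i \<bullet> (M *v z i) \<ge> 2) \<and> psd M}"
  have min1: "Mstar \<in> S1" "\<And>M'. M' \<in> S1 \<Longrightarrow> M' \<noteq> Mstar \<Longrightarrow> f Mstar < f M'"
    using assms(5) unfolding is_the_minimizer_def S1_def f_def by auto
  have psdM: "psd Mstar" and zM: "\<And>i. i \<in> {1..n} \<Longrightarrow> z i \<bullet> (Mstar *v z i) \<ge> 2"
    using min1(1) by (auto simp: S1_def)
  have symM: "transpose Mstar = Mstar" using psdM by (simp add: psd_def)
  define N where "N = P ** Mstar ** P"
  have NS1: "N \<in> S1"
  proof -
    have "transpose N = N" using symM PT by (simp add: N_def matrix_transpose_mul matrix_mul_assoc)
    moreover have "\<And>v. 0 \<le> v \<bullet> (N *v v)" using psdM by (simp add: N_def quad psd_def)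
    moreover have "\<And>i. i \<in> {1..n} \<Longrightarrow> z i \<bullet> (N *v z i) \<ge> 2"
      using zM by (simp add: N_def quad zfix)
    ultimately show ?thesis by (simp add: S1_def psd_def)
  qed
  have "G Mstar = G N + G (Mstar - N)" unfolding N_def by (rule G_decomp[OF symM PT PP])
  moreover have "G (Mstar - N) \<ge> 0" by (simp add: G_def sum_nonneg)
  ultimately have "f N \<le> f Mstar" by (simp add: fG)
  hence MN: "Mstar = N" using min1(2)[OF NS1] by force
  have Meq: "Mstar *v w = (P ** Mstar ** P) *v w" for w
    using arg_cong[where f="\<lambda>A. A *v w", OF MN[unfolded N_def]] by blast
  have Mker: "\<And>w. w \<in> V \<Longrightarrow> Mstar *v w = 0"
  proof -
    fix w assume "w \<in> V"
    hence "(P ** Mstar ** P) *v w = 0" using P0 by (simp add: matrix_vector_mul_assoc[symmetric])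
    thus "Mstar *v w = 0" using Meq by simp
  qed
  have gen: "\<And>j. j \<in> {1..k} \<Longrightarrow> T j (x 0) - x 0 \<in> V"
    unfolding V_def by (rule span_base) blast
  show ?thesis
    unfolding is_the_minimizer_def
  proof (intro conjI ballI impI)
    show "Mstar \<in> {M. (\<forall>i\<in>{1..n}. (x i - x 0) \<bullet> (M *v (x i - x 0)) \<ge> 2)
               \<and> (\<forall>j\<in>{1..k}. (T j (x 0) - x 0) \<bullet> (M *v (T j (x 0) - x 0)) = 0)
               \<and> psd M}"
    proof -
      have "\<And>i. i \<in> {1..n} \<Longrightarrow> (x i - x 0) \<bullet> (Mstar *v (x i - x 0)) \<ge> 2"
      proof -
        fix i assume i: "i \<in> {1..n}"
        have "(x i - x 0) \<bullet> (Mstar *v (x i - x 0)) = (x i - x 0) \<bullet> ((P ** Mstar ** P) *v (x i - x 0))"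
          by (simp only: Meq[symmetric])
        also have "\<dots> = z i \<bullet> (Mstar *v z i)" by (simp only: quad zP)
        finally show "(x i - x 0) \<bullet> (Mstar *v (x i - x 0)) \<ge> 2" using zM[OF i] by simp
      qed
      moreover have "\<And>j. j \<in> {1..k} \<Longrightarrow> (T j (x 0) - x 0) \<bullet> (Mstar *v (T j (x 0) - x 0)) = 0"
        using Mker gen by simp
      ultimately show ?thesis using psdM by simp
    qed
  next
    fix M' assume M'S: "M' \<in> {M. (\<forall>i\<in>{1..n}. (x i - x 0) \<bullet> (M *v (x i - x 0)) \<ge> 2)
               \<and> (\<forall>j\<in>{1..k}. (T j (x 0) - x 0) \<bullet> (M *v (T j (x 0) - x 0)) = 0)
               \<and> psd M}" and ne: "M' \<noteq> Mstar"
    have psd': "psd M'" using M'S by simp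
    have sym': "transpose M' = M'" and pos': "\<And>v. 0 \<le> v \<bullet> (M' *v v)" using psd' by (auto simp: psd_def)
    have adj': "\<And>a b. a \<bullet> (M' *v b) = (M' *v a) \<bullet> b"
      by (metis dot_lmul_matrix sym' transpose_matrix_vector)
    have kgen: "{T j (x 0) - x 0 | j. j \<in> {1..k}} \<subseteq> {w. M' *v w = 0}"
      using M'S psd_kernel[OF sym' pos'] by auto
    have ssub: "subspace {w. M' *v w = 0}"
      by (auto simp: subspace_def matrix_vector_right_distrib matrix_vector_mult_scaleR)
    have ker': "\<And>w. w \<in> V \<Longrightarrow> M' *v w = 0"
      using span_minimal[OF kgen ssub] unfolding V_def by blast
    have "M' \<in> S1"
    proof -
      have "\<And>i. i \<in> {1..n} \<Longrightarrow> z i \<bullet> (M' *v z i) \<ge> 2"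
      proof -
        fix i assume i: "i \<in> {1..n}"
        let ?u = "x i - x 0"
        have wV: "?u - z i \<in> V" using P2 zP by simp
        have "M' *v ?u = M' *v z i + M' *v (?u - z i)" by (simp add: matrix_vector_right_distrib[symmetric])
        hence e: "M' *v ?u = M' *v z i" using ker'[OF wV] by simp
        have "?u \<bullet> (M' *v ?u) = z i \<bullet> (M' *v z i) + (?u - z i) \<bullet> (M' *v z i)"
          by (simp add: e inner_diff_left)
        also have "(?u - z i) \<bullet> (M' *v z i) = 0" using adj' ker'[OF wV] by simp
        finally have "?u \<bullet> (M' *v ?u) = z i \<bullet> (M' *v z i)" by simp
        moreover have "?u \<bullet> (M' *v ?u) \<ge> 2" using M'S i by blast
        ultimately show "z i \<bullet> (M' *v z i) \<ge> 2" by simp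
      qed
      thus ?thesis using psd' by (simp add: S1_def)
    qed
    from min1(2)[OF this ne] show "(1/2) * (frob_norm Mstar)^2 < (1/2) * (frob_norm M')^2"
      by (simp add: f_def)
  qed
qed

end
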